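(* Let $\Omega\subset\mathbb{R}^n$ be a bounded open set, and let $\varpi,\varpi_1$ be oscillation functions such that $\varpi$ is concave in a neighborhood of the origin and $\lim_{r\to0}\varpi_1(r)/\varpi(r)=0$. Then $D_{\varpi_1}(\overline{\Omega})$ is not dense in $D_{\varpi}(\overline{\Omega})$ (with respect to the norm $\|\cdot\|_{\varpi}$).
   Context: An oscillation function is a real, continuous, non-decreasing function $\varpi$ defined on $[0,R)$ for some $R>0$, with $\varpi(0)=0$ and $\varpi(r)>0$ for $r>0$. For $f\in C(\overline{\Omega})$ and $r>0$ set $\omega_f(r)=\sup\{|f(x)-f(y)|:\ x,y\in\Omega,\ 0<|x-y|\le r\}$. Define $[f]_{\varpi}=\sup_{0<r<R}\omega_f(r)/\varpi(r)$, $D_{\varpi}(\overline{\Omega})=\{f\in C(\overline{\Omega}): [f]_{\varpi}<\infty\}$, with norm $\|f\|_{\varpi}=[f]_{\varpi}+\sup_{\overline{\Omega}}|f|$. Note $D_{\varpi_1}(\overline{\Omega})\subset D_{\varpi}(\overline{\Omega})$ under the hypothesis. *)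

theory Defs
  imports "HOL-Analysis.Analysis"
begin

definition oscillation_function :: "(real \<Rightarrow> real) \<Rightarrow> real \<Rightarrow> bool" where
  "oscillation_function w R \<longleftrightarrow>
     R > 0 \<and> continuous_on {0..<R} w \<and> mono_on {0..<R} w \<and> w 0 = 0 \<and>
     (\<forall>r\<in>{0<..<R}. w r > 0)"

definition modcont :: "'a::euclidean_space set \<Rightarrow> ('a \<Rightarrow> real) \<Rightarrow> real \<Rightarrow> real" where
  "modcont \<Omega> f r = Sup {\<bar>f x - f y\<bar> | x y. x \<in> \<Omega> \<and> y \<in> \<Omega> \<and> 0 < dist x y \<and> dist x y \<le> r}"

definition osc_seminorm :: "(real \<Rightarrow> real) \<Rightarrow> real \<Rightarrow> 'a::euclidean_space set \<Rightarrow> ('a \<Rightarrow> real) \<Rightarrow> ereal" where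
  "osc_seminorm w R \<Omega> f = (SUP r\<in>{0<..<R}. ereal (modcont \<Omega> f r / w r))"

definition Dspace :: "(real \<Rightarrow> real) \<Rightarrow> real \<Rightarrow> 'a::euclidean_space set \<Rightarrow> ('a \<Rightarrow> real) set" where
  "Dspace w R \<Omega> = {f. continuous_on (closure \<Omega>) f \<and> osc_seminorm w R \<Omega> f < \<infinity>}"

definition osc_norm :: "(real \<Rightarrow> real) \<Rightarrow> real \<Rightarrow> 'a::euclidean_space set \<Rightarrow> ('a \<Rightarrow> real) \<Rightarrow> ereal" where
  "osc_norm w R \<Omega> f = osc_seminorm w R \<Omega> f + ereal (Sup ((\<lambda>x. \<bar>f x\<bar>) ` closure \<Omega>))"

end

theory Submission
  imports Defs
begin

lemma subadd:
  fixes w :: "real \<Rightarrow> real"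
  assumes c: "concave_on {0..<\<delta>} w" and w0: "w 0 = 0" and "0 \<le> b" "b \<le> a" "a < \<delta>"
  shows "w a \<le> w b + w (a - b)"
proof (cases "a = 0")
  case True thus ?thesis using assms by simp
next
  case False
  hence a: "a > 0" using assms by simp
  have 1: "w ((1 - b/a) *\<^sub>R 0 + (b/a) *\<^sub>R a) \<ge> (1 - b/a) * w 0 + (b/a) * w a"
    by (rule concave_onD[OF c]) (use assms a in auto)
  have 2: "w ((1 - (a-b)/a) *\<^sub>R 0 + ((a-b)/a) *\<^sub>R a) \<ge> (1 - (a-b)/a) * w 0 + ((a-b)/a) * w a"
    by (rule concave_onD[OF c]) (use assms a in auto)
  have "w b \<ge> (b/a) * w a" using 1 a w0 by simp
  moreover have "w (a-b) \<ge> ((a-b)/a) * w a" using 2 a w0 by simp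
  moreover have "(b/a) * w a + ((a-b)/a) * w a = w a" using a by (simp add: field_simps)
  ultimately show ?thesis by linarith
qed

lemma modcont_ge:
  assumes "x \<in> \<Omega>" "y \<in> \<Omega>" "0 < dist x y" "dist x y \<le> r" "\<And>z. z \<in> \<Omega> \<Longrightarrow> \<bar>F z\<bar> \<le> M"
  shows "\<bar>F x - F y\<bar> \<le> modcont \<Omega> F r"
  unfolding modcont_def
proof (rule cSup_upper)
  show "\<bar>F x - F y\<bar> \<in> {\<bar>F x - F y\<bar> |x y. x \<in> \<Omega> \<and> y \<in> \<Omega> \<and> 0 < dist x y \<and> dist x y \<le> r}"
    using assms by blast
  show "bdd_above {\<bar>F x - F y\<bar> |x y. x \<in> \<Omega> \<and> y \<in> \<Omega> \<and> 0 < dist x y \<and> dist x y \<le> r}"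
  proof (rule bdd_aboveI)
    fix t assume "t \<in> {\<bar>F x - F y\<bar> |x y. x \<in> \<Omega> \<and> y \<in> \<Omega> \<and> 0 < dist x y \<and> dist x y \<le> r}"
    then obtain a c where "t = \<bar>F a - F c\<bar>" "a \<in> \<Omega>" "c \<in> \<Omega>" by blast
    with assms(5)[of a] assms(5)[of c] show "t \<le> 2*M" by linarith
  qed
qed

lemma modcont_le:
  assumes "\<And>x y. x \<in> \<Omega> \<Longrightarrow> y \<in> \<Omega> \<Longrightarrow> 0 < dist x y \<Longrightarrow> dist x y \<le> r \<Longrightarrow> \<bar>F x - F y\<bar> \<le> c"
    and "\<exists>x y. x \<in> \<Omega> \<and> y \<in> \<Omega> \<and> 0 < dist x y \<and> dist x y \<le> r"
  shows "modcont \<Omega> F r \<le> c"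
  unfolding modcont_def
  by (rule cSup_least) (use assms in auto)

theorem theorem2p7:
  fixes \<Omega> :: "'a::euclidean_space set"
    and w w1 :: "real \<Rightarrow> real" and R R1 :: real
  assumes "bounded \<Omega>" and "open \<Omega>" and "\<Omega> \<noteq> {}"
    and "oscillation_function w R" and "oscillation_function w1 R1"
    and "\<exists>\<delta>>0. \<delta> \<le> R \<and> concave_on {0..<\<delta>} w"
    and "((\<lambda>r. w1 r / w r) \<longlongrightarrow> 0) (at_right 0)"
  shows "\<exists>f\<in>Dspace w R \<Omega>. \<exists>\<epsilon>>0. \<forall>g\<in>Dspace w1 R1 \<Omega>.
           osc_norm w R \<Omega> (\<lambda>x. f x - g x) \<ge> ereal \<epsilon>"
proof -
  have R: "R > 0" and wc: "continuous_on {0..<R} w" and wm: "mono_on {0..<R} w"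
    and w0: "w 0 = 0" and wp: "\<And>r. r \<in> {0<..<R} \<Longrightarrow> w r > 0"
    using assms(4) unfolding oscillation_function_def by auto
  have R1: "R1 > 0" and w1p: "\<And>r. r \<in> {0<..<R1} \<Longrightarrow> w1 r > 0"
    using assms(5) unfolding oscillation_function_def by auto
  obtain \<delta> where \<delta>: "\<delta> > 0" "\<delta> \<le> R" and cc: "concave_on {0..<\<delta>} w" using assms(6) by blast
  define d where "d = \<delta> / 2"
  have d: "0 < d" "d < \<delta>" "d < R" using \<delta> by (auto simp: d_def)
  obtain x0 where x0: "x0 \<in> \<Omega>" using assms(3) by blast
  obtain e where e: "e > 0" "ball x0 e \<subseteq> \<Omega>" using assms(2) x0 open_contains_ball by blast
  obtain b :: 'a where b: "norm b = 1" using norm_Basis SOME_Basis by blast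
  have wmono: "w s \<le> w t" if "0 \<le> s" "s \<le> t" "t < R" for s t
    using wm that by (auto intro: mono_onD)
  define f where "f x = w (min (dist x x0) d)" for x
  have fb: "\<bar>f x\<bar> \<le> w d" for x
  proof -
    have "0 \<le> w (min (dist x x0) d)" using wmono[of 0 "min (dist x x0) d"] w0 d by auto
    moreover have "w (min (dist x x0) d) \<le> w d" using wmono[of "min (dist x x0) d" d] d by auto
    ultimately show ?thesis by (simp add: f_def)
  qed
  have fkey: "\<bar>f x - f y\<bar> \<le> w r" if "dist x y \<le> r" "r < R" for x y r
  proof -
    define p where "p = min (dist x x0) d"
    define q where "q = min (dist y x0) d"
    have pq: "0 \<le> p" "p \<le> d" "0 \<le> q" "q \<le> d" using d by (auto simp: p_def q_def)
    have "\<bar>dist x x0 - dist y x0\<bar> \<le> dist x y" using abs_dist_diff_le[of x x0 y] by (simp add: dist_commute)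
    hence dpq: "\<bar>p - q\<bar> \<le> r" using that unfolding p_def q_def by linarith
    have "\<bar>w p - w q\<bar> \<le> w \<bar>p - q\<bar>"
    proof (cases "q \<le> p")
      case True
      have "w p \<le> w q + w (p - q)" by (rule subadd[OF cc w0]) (use pq True d in auto)
      moreover have "w q \<le> w p" using wmono[of q p] pq True d by auto
      ultimately show ?thesis using True by auto
    next
      case False
      have "w q \<le> w p + w (q - p)" by (rule subadd[OF cc w0]) (use pq False d in auto)
      moreover have "w p \<le> w q" using wmono[of p q] pq False d by auto
      ultimately show ?thesis using False by auto
    qed
    also have "w \<bar>p - q\<bar> \<le> w r" using wmono[of "\<bar>p - q\<bar>" r] dpq that by auto
    finally show ?thesis by (simp add: f_def p_def q_def)
  qed
  have pts: "\<exists>x y. x \<in> \<Omega> \<and> y \<in> \<Omega> \<and> 0 < dist x y \<and> dist x y \<le> r" if "r > 0" for r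
  proof -
    define t where "t = min r (e/2)"
    have t: "0 < t" "t \<le> r" "t < e" using that e by (auto simp: t_def)
    have "dist x0 (x0 + t *\<^sub>R b) = t" using b t by (simp add: dist_norm)
    hence "x0 + t *\<^sub>R b \<in> \<Omega>" using e t by auto
    thus ?thesis using x0 t \<open>dist x0 (x0 + t *\<^sub>R b) = t\<close> by (metis dist_commute)
  qed
  have fD: "f \<in> Dspace w R \<Omega>"
  proof -
    have "continuous_on UNIV (\<lambda>x. min (dist x x0) d)" by (intro continuous_intros)
    moreover have "(\<lambda>x. min (dist x x0) d) ` UNIV \<subseteq> {0..<R}" using d by auto
    ultimately have "continuous_on UNIV f" unfolding f_def by (rule continuous_on_compose2[OF wc])
    hence c: "continuous_on (closure \<Omega>) f" by (rule continuous_on_subset) auto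
    have "osc_seminorm w R \<Omega> f \<le> 1"
      unfolding osc_seminorm_def
    proof (rule SUP_least)
      fix r assume r: "r \<in> {0<..<R}"
      have "modcont \<Omega> f r \<le> w r" by (rule modcont_le) (use fkey r pts in auto)
      thus "ereal (modcont \<Omega> f r / w r) \<le> 1" using wp[OF r] by simp
    qed
    thus ?thesis using c unfolding Dspace_def by auto
  qed
  show ?thesis
  proof (intro bexI[OF _ fD] exI[of _ "1/2"] conjI ballI)
    fix g assume g: "g \<in> Dspace w1 R1 \<Omega>"
    have gc: "continuous_on (closure \<Omega>) g" and gs: "osc_seminorm w1 R1 \<Omega> g < \<infinity>"
      using g unfolding Dspace_def by auto
    have "compact (closure \<Omega>)" using assms(1) by (simp add: compact_closure)
    hence "bounded (g ` closure \<Omega>)" using gc by (intro compact_imp_bounded compact_continuous_image)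
    then obtain K where K: "\<And>x. x \<in> closure \<Omega> \<Longrightarrow> \<bar>g x\<bar> \<le> K"
      unfolding bounded_real by blast
    obtain B where B: "osc_seminorm w1 R1 \<Omega> g \<le> ereal B"
      using gs by (cases "osc_seminorm w1 R1 \<Omega> g") auto
    have gB: "modcont \<Omega> g r \<le> B * w1 r" if r: "r \<in> {0<..<R1}" for r
    proof -
      have "ereal (modcont \<Omega> g r / w1 r) \<le> osc_seminorm w1 R1 \<Omega> g"
        unfolding osc_seminorm_def using r by (rule SUP_upper)
      with B have "ereal (modcont \<Omega> g r / w1 r) \<le> ereal B" by (rule order.trans[rotated])
      hence "modcont \<Omega> g r / w1 r \<le> B" by simp
      thus ?thesis using w1p[OF r] by (simp add: divide_le_eq)
    qed
    have "((\<lambda>r. B * (w1 r / w r)) \<longlongrightarrow> B * 0) (at_right 0)"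
      by (intro tendsto_mult tendsto_const assms(7))
    hence ev1: "\<forall>\<^sub>F r in at_right 0. B * (w1 r / w r) < 1/2"
      by (intro order_tendstoD) auto
    define m where "m = min (min R R1) (min d e)"
    have m: "m > 0" using R R1 d e by (auto simp: m_def)
    have ev2: "\<forall>\<^sub>F r in at_right (0::real). 0 < r \<and> r < m"
      unfolding eventually_at_right_field using m by (intro exI[of _ m]) auto
    obtain r where r: "B * (w1 r / w r) < 1/2" "0 < r" "r < m"
      using eventually_happens[OF eventually_conj[OF ev1 ev2]] by (auto simp: trivial_limit_at_right_real)
    have rR: "r < R" "r < R1" "r < d" "r < e" using r m by (auto simp: m_def)
    define x1 where "x1 = x0 + r *\<^sub>R b"
    have dx: "dist x1 x0 = r" using b r by (simp add: x1_def dist_norm)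
    hence x1: "x1 \<in> \<Omega>" using e rR by (auto simp: dist_commute)
    have fdiff: "f x1 - f x0 = w r" using dx rR w0 d by (simp add: f_def)
    have "\<bar>g x1 - g x0\<bar> \<le> modcont \<Omega> g r"
      by (rule modcont_ge[where M=K]) (use x1 x0 dx r K closure_subset in auto)
    also have "\<dots> \<le> B * w1 r" using gB rR r by auto
    finally have gd: "\<bar>g x1 - g x0\<bar> \<le> B * w1 r" .
    let ?h = "\<lambda>x. f x - g x"
    have hb: "\<bar>?h x\<bar> \<le> w d + K" if "x \<in> closure \<Omega>" for x using fb[of x] K[OF that] by linarith
    have "\<bar>?h x1 - ?h x0\<bar> \<le> modcont \<Omega> ?h r"
      by (rule modcont_ge[where M="w d + K"]) (use x1 x0 dx r hb closure_subset in auto)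
    moreover have "\<bar>?h x1 - ?h x0\<bar> \<ge> w r - B * w1 r" using fdiff gd by linarith
    ultimately have hm: "modcont \<Omega> ?h r \<ge> w r - B * w1 r" by linarith
    have wr: "w r > 0" using wp rR r by auto
    have "B * (w1 r / w r) = B * w1 r / w r" by simp
    hence "1/2 \<le> (w r - B * w1 r) / w r" using r(1) wr by (simp add: diff_divide_distrib)
    also have "\<dots> \<le> modcont \<Omega> ?h r / w r" using hm wr by (simp add: divide_right_mono)
    finally have "ereal (1/2) \<le> ereal (modcont \<Omega> ?h r / w r)" by simp
    also have "\<dots> \<le> osc_seminorm w R \<Omega> ?h"
      unfolding osc_seminorm_def using rR r by (intro SUP_upper) auto
    finally have s1: "ereal (1/2) \<le> osc_seminorm w R \<Omega> ?h" .
    have "0 \<le> \<bar>?h x0\<bar>" by simp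
    also have "\<bar>?h x0\<bar> \<le> Sup ((\<lambda>x. \<bar>?h x\<bar>) ` closure \<Omega>)"
      by (rule cSup_upper) (use x0 closure_subset hb in \<open>auto intro!: bdd_aboveI2\<close>)
    finally have s2: "ereal 0 \<le> ereal (Sup ((\<lambda>x. \<bar>?h x\<bar>) ` closure \<Omega>))" by simp
    have "ereal (1/2) = ereal (1/2) + ereal 0" by simp
    also have "\<dots> \<le> osc_norm w R \<Omega> ?h" unfolding osc_norm_def by (rule add_mono[OF s1 s2])
    finally show "ereal (1/2) \<le> osc_norm w R \<Omega> ?h" .
  qed simp
qed

end
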